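(* Let $f:\mathbb{R}^n\times\mathbb{R}_+\to\mathbb{R}$ be thrice continuously differentiable with $\nabla_{\mathbf{x}\mathbf{x}} f(\mathbf{x},t)\succeq m\mathbf{I}_n$ for some $m>0$ and all $(\mathbf{x},t)$, and suppose that for all $\mathbf{x},t$ and $i\in\{1,\dots,n\}$: $\|\nabla_{\mathbf{x}\mathbf{x}} f\|_2\le C_{xx}$, $\|\nabla_{\mathbf{x}t} f\|_2\le C_{xt}$, $\|\nabla_{\mathbf{x}\mathbf{x}t} f\|_2\le C_{xxt}$, $\|\nabla_{\mathbf{x}tt} f\|_2\le C_{xtt}$, $\|\nabla_{\mathbf{x}\mathbf{x}\mathbf{x}_i} f\|_2\le C_{xxx}$ for given positive constants. Fix $\alpha>0$, $\epsilon>0$, $t_0=0$ and $\mathbf{x}_0\in\mathbb{R}^n$. The self-triggered algorithm generates $\{t_k\}$, $\{\mathbf{x}_k\}$ recursively: compute $\dot{\mathbf{x}}_k=-\nabla_{\mathbf{x}\mathbf{x}}^{-1} f(\mathbf{x}_k,t_k)[\alpha\nabla_{\mathbf{x}} f(\mathbf{x}_k,t_k)+\nabla_{\mathbf{x}t} f(\mathbf{x}_k,t_k)]$, set $\mathbf{x}(t)=\mathbf{x}_k+\dot{\mathbf{x}}_k(t-t_k)$ for $t\in[t_k,t_{k+1}]$ and $V(t)=\tfrac12\|\nabla_{\mathbf{x}} f(\mathbf{x}(t),t)\|_2^2$; if $V(t_k)\ge\epsilon$ (equivalently $\|\nabla_{\mathbf{x}} f(\mathbf{x}_k,t_k)\|_2\ge\sqrt{2\epsilon}$),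 let $t_{k+1}$ be the smallest $t>t_k$ with $\phi_k(t)=0$; otherwise let $t_{k+1}$ be the smallest $t>t_k$ with $\psi_k(t)=\epsilon$, where $\psi_k(t)=V(t_k)+\int_{t_k}^t\phi_k(\sigma)\,d\sigma$; then set $\mathbf{x}_{k+1}=\mathbf{x}_k+\dot{\mathbf{x}}_k(t_{k+1}-t_k)$. Here $\phi_k$ is either (for all $k$) $$\phi_k(t)=\tfrac12 a_kb_k(t-t_k)^2+\big(a_k^2+b_k\sqrt{2V(t_k)}\big)(t-t_k)-2\alpha V(t_k)$$ or (for all $k$) $$\phi_k(t)=\tfrac12 b_k^2(t-t_k)^3+\tfrac32\alpha\sqrt{2V(t_k)}\,b_k(t-t_k)^2+\big(\sqrt{2V(t_k)}\,b_k+2\alpha^2V(t_k)\big)(t-t_k)-2\alpha V(t_k),$$ with $a_k=C_{xx}\|\dot{\mathbf{x}}_k\|_2+C_{xt}$ and $b_k=(C_{xxx}\|\dot{\mathbf{x}}_k\|_1+2C_{xxt})\|\dot{\mathbf{x}}_k\|_2+C_{xtt}$. Then there exists $m'\in\mathbb{Z}_+$ such that (i) $V(t)\le\epsilon$ for all $t\ge t_{m'}$; and (ii) there is $\tau(\epsilon)>0$ with $t_{k+1}-t_k>\tau(\epsilon)$ for all $k\in\mathbb{Z}_+$.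
   Context: $\nabla_{\mathbf{x}} f$ is the gradient in $\mathbf{x}$, $\nabla_{\mathbf{x}\mathbf{x}} f$ the Hessian in $\mathbf{x}$, $\nabla_{\mathbf{x}t} f=\frac{\partial}{\partial t}\nabla_{\mathbf{x}} f$, $\nabla_{\mathbf{x}\mathbf{x}t} f=\frac{\partial}{\partial t}\nabla_{\mathbf{x}\mathbf{x}} f$, $\nabla_{\mathbf{x}tt} f=\frac{\partial^2}{\partial t^2}\nabla_{\mathbf{x}} f$, $\nabla_{\mathbf{x}\mathbf{x}\mathbf{x}_i} f=\frac{\partial}{\partial \mathbf{x}_i}\nabla_{\mathbf{x}\mathbf{x}} f$. Matrix norms are spectral norms; $\|\cdot\|_1$ is the vector one-norm. The algorithm is run indefinitely (no final time). *)

theory Defs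
  imports "HOL-Analysis.Analysis"
begin

definition C3_on :: "('a::real_normed_vector \<Rightarrow> real) \<Rightarrow> 'a set \<Rightarrow> bool" where
  "C3_on F S \<longleftrightarrow>
     (\<exists>(D1 :: 'a \<Rightarrow> ('a \<Rightarrow>\<^sub>L real))
        (D2 :: 'a \<Rightarrow> ('a \<Rightarrow>\<^sub>L ('a \<Rightarrow>\<^sub>L real)))
        (D3 :: 'a \<Rightarrow> ('a \<Rightarrow>\<^sub>L ('a \<Rightarrow>\<^sub>L ('a \<Rightarrow>\<^sub>L real)))).
        (\<forall>z\<in>S. (F has_derivative blinfun_apply (D1 z)) (at z within S)) \<and>
        (\<forall>z\<in>S. (D1 has_derivative blinfun_apply (D2 z)) (at z within S)) \<and>
        (\<forall>z\<in>S. (D2 has_derivative blinfun_apply (D3 z)) (at z within S)) \<and>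
        continuous_on S D3)"

definition l1norm :: "real^'n \<Rightarrow> real" where
  "l1norm v = (\<Sum>i\<in>UNIV. \<bar>v $ i\<bar>)"

text \<open>The two triggering functions, as functions of s = t - t_k;
  V0 stands for V(t_k).\<close>
definition phi_quad :: "real \<Rightarrow> real \<Rightarrow> real \<Rightarrow> real \<Rightarrow> real \<Rightarrow> real" where
  "phi_quad \<alpha> a b V0 s = 1/2 * a * b * s^2 + (a^2 + b * sqrt (2 * V0)) * s - 2 * \<alpha> * V0"

definition phi_cub :: "real \<Rightarrow> real \<Rightarrow> real \<Rightarrow> real \<Rightarrow> real" where
  "phi_cub \<alpha> b V0 s = 1/2 * b^2 * s^3 + 3/2 * \<alpha> * sqrt (2 * V0) * b * s^2
      + (sqrt (2 * V0) * b + 2 * \<alpha>^2 * V0) * s - 2 * \<alpha> * V0"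

end

theory Submission
  imports Defs
begin



lemma bl_matvec: "bounded_linear (\<lambda>A::real^'n^'m. A *v v)"
proof -
  have "linear (\<lambda>A::real^'n^'m. A *v v)"
    by (rule linearI) (simp_all add: matrix_vector_mult_add_rdistrib vec_eq_iff matrix_vector_mult_def sum_distrib_left sum.distrib algebra_simps)
  then show ?thesis by (simp add: linear_conv_bounded_linear)
qed

lemma vd_matvec: "(F has_vector_derivative D) net \<Longrightarrow> ((\<lambda>r. F r *v v) has_vector_derivative (D *v v)) net"
  for F :: "real \<Rightarrow> real^'n^'m"
  using bounded_linear.has_vector_derivative[OF bl_matvec] by blast

lemma vd_shift: "(f has_vector_derivative D) (at (s + r)) \<Longrightarrow> ((\<lambda>r. f (s + r)) has_vector_derivative D) (at r)"
  for f :: "real \<Rightarrow> 'a::real_normed_vector"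
proof -
  assume a: "(f has_vector_derivative D) (at (s + r))"
  have "((\<lambda>r. s + r) has_vector_derivative 1) (at r)"
    by (auto intro!: derivative_eq_intros)
  from vector_diff_chain_at[OF this] a show ?thesis by (simp add: o_def)
qed

lemma onorm_scale_vec: "onorm (\<lambda>h::real. h *\<^sub>R D) = norm D"
  using onorm_scaleR_left[OF bounded_linear_ident, of D] by (simp add: onorm_id)

lemma matvec_norm: "onorm (\<lambda>v. A *v v) \<le> C \<Longrightarrow> norm (A *v v) \<le> C * norm v"
  for A :: "real^'n^'m"
  by (meson dual_order.trans matrix_vector_mul_bounded_linear mult_right_mono norm_ge_zero onorm)

lemma var_bound:
  fixes f :: "real \<Rightarrow> 'a::real_normed_vector"
  assumes cont: "continuous_on (closed_segment 0 h) f"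
  and der: "\<And>r. r \<in> open_segment 0 h \<Longrightarrow> (f has_vector_derivative f' r) (at r)"
  and bnd: "\<And>r. r \<in> open_segment 0 h \<Longrightarrow> norm (f' r) \<le> c * \<bar>r\<bar> + d"
  shows "norm (f h - f 0) \<le> c * h^2/2 + d * \<bar>h\<bar>"
proof (cases "h = 0")
  case True then show ?thesis by simp
next
  case False
  show ?thesis
  proof (cases "h > 0")
    case True
    have "norm (f h - f 0) \<le> (c * h^2/2 + d * h) - (c * 0^2/2 + d * 0)"
      apply (rule differentiable_bound_general[where \<phi>="\<lambda>r. c * r^2/2 + d * r" and \<phi>'="\<lambda>r. c * r + d" and f'=f'])
      using True cont der bnd
      by (auto simp: closed_segment_eq_real_ivl open_segment_eq_real_ivl has_real_derivative_iff_has_vector_derivative[symmetric]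
          intro!: continuous_intros derivative_eq_intros)
    then show ?thesis using True by simp
  next
    case False
    with \<open>h \<noteq> 0\<close> have hn: "h < 0" by simp
    have "norm (f 0 - f h) \<le> (- c * 0^2/2 + d * 0) - (- c * h^2/2 + d * h)"
      apply (rule differentiable_bound_general[where \<phi>="\<lambda>r. - c * r^2/2 + d * r" and \<phi>'="\<lambda>r. - c * r + d" and f'=f'])
      using hn cont der bnd
      by (auto simp: closed_segment_eq_real_ivl open_segment_eq_real_ivl has_real_derivative_iff_has_vector_derivative[symmetric]
          intro!: continuous_intros derivative_eq_intros)
    then show ?thesis using hn by (simp add: norm_minus_commute)
  qed
qed

lemma vd_shift2: "((\<lambda>q. F (r + q)) has_vector_derivative D) (at 0) \<Longrightarrow> (F has_vector_derivative D) (at r)"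
  for F :: "real \<Rightarrow> 'a::real_normed_vector"
  using vd_shift[of "\<lambda>q. F (r + q)" D "-r" r] by simp

lemma l1norm_scale: "l1norm (c *\<^sub>R v) = \<bar>c\<bar> * l1norm v"
  by (simp add: l1norm_def abs_mult sum_distrib_left)

lemma l1norm_nonneg: "l1norm v \<ge> 0"
  by (simp add: l1norm_def sum_nonneg)




locale setting =
  fixes gx gxt gxtt :: "real^'n \<Rightarrow> real \<Rightarrow> real^'n"
    and Hxx Hxxt :: "real^'n \<Rightarrow> real \<Rightarrow> real^'n^'n"
    and Hxxx :: "'n \<Rightarrow> real^'n \<Rightarrow> real \<Rightarrow> real^'n^'n"
    and Cxx Cxt Cxxt Cxtt Cxxx :: real
  assumes hess: "\<And>y s. s \<ge> 0 \<Longrightarrow> ((\<lambda>z. gx z s) has_derivative (\<lambda>h. Hxx y s *v h)) (at y)"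
    and d_gxt: "\<And>y s. s \<ge> 0 \<Longrightarrow>
                  ((\<lambda>r. gx y r) has_vector_derivative gxt y s) (at s within {0..})"
    and d_Hxxt: "\<And>y s. s \<ge> 0 \<Longrightarrow>
                  ((\<lambda>r. Hxx y r) has_vector_derivative Hxxt y s) (at s within {0..})"
    and d_gxtt: "\<And>y s. s \<ge> 0 \<Longrightarrow>
                  ((\<lambda>r. gxt y r) has_vector_derivative gxtt y s) (at s within {0..})"
    and d_Hxxx: "\<And>y s i. s \<ge> 0 \<Longrightarrow>
                  ((\<lambda>r. Hxx (y + r *\<^sub>R axis i 1) s) has_vector_derivative Hxxx i y s) (at 0)"
    and bnd_xx: "\<And>y s. s \<ge> 0 \<Longrightarrow> onorm (\<lambda>v. Hxx y s *v v) \<le> Cxx"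
    and bnd_xt: "\<And>y s. s \<ge> 0 \<Longrightarrow> norm (gxt y s) \<le> Cxt"
    and bnd_xxt: "\<And>y s. s \<ge> 0 \<Longrightarrow> onorm (\<lambda>v. Hxxt y s *v v) \<le> Cxxt"
    and bnd_xtt: "\<And>y s. s \<ge> 0 \<Longrightarrow> norm (gxtt y s) \<le> Cxtt"
    and bnd_xxx: "\<And>y s i. s \<ge> 0 \<Longrightarrow> onorm (\<lambda>v. Hxxx i y s *v v) \<le> Cxxx"
begin

lemma H_axis:
  assumes s: "s \<ge> 0"
  shows "norm ((Hxx (y + c *\<^sub>R axis i 1) s - Hxx y s) *v v) \<le> Cxxx * \<bar>c\<bar> * norm v"
proof -
  let ?F = "\<lambda>r. Hxx (y + r *\<^sub>R axis i 1) s *v v"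
  have der: "(?F has_derivative (\<lambda>h. h *\<^sub>R (Hxxx i (y + r *\<^sub>R axis i 1) s *v v))) (at r within UNIV)" for r
  proof -
    have "((\<lambda>q. Hxx (y + r *\<^sub>R axis i 1 + q *\<^sub>R axis i 1) s) has_vector_derivative Hxxx i (y + r *\<^sub>R axis i 1) s) (at 0)"
      using d_Hxxx[OF s] .
    then have "((\<lambda>q. Hxx (y + (r + q) *\<^sub>R axis i 1) s) has_vector_derivative Hxxx i (y + r *\<^sub>R axis i 1) s) (at 0)"
      by (simp add: scaleR_add_left add.assoc)
    then have "((\<lambda>r. Hxx (y + r *\<^sub>R axis i 1) s) has_vector_derivative Hxxx i (y + r *\<^sub>R axis i 1) s) (at r)"
      by (rule vd_shift2)
    from vd_matvec[OF this, of v] show ?thesis by (simp add: has_vector_derivative_def)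
  qed
  have "norm (?F c - ?F 0) \<le> (Cxxx * norm v) * norm (c - 0)"
    apply (rule differentiable_bound[where S=UNIV, OF convex_UNIV der])
    using bnd_xxx[OF s] by (auto simp: onorm_scale_vec intro!: matvec_norm)
  then show ?thesis by (simp add: matrix_vector_mult_diff_rdistrib mult_ac)
qed

lemma H_x:
  assumes s: "s \<ge> 0"
  shows "norm ((Hxx y' s - Hxx y s) *v v) \<le> Cxxx * l1norm (y' - y) * norm v"
proof -
  define d where "d = y' - y"
  have main: "finite S \<Longrightarrow> norm ((Hxx (y + (\<Sum>i\<in>S. (d$i) *\<^sub>R axis i 1)) s - Hxx y s) *v v)
          \<le> Cxxx * (\<Sum>i\<in>S. \<bar>d$i\<bar>) * norm v" for S
  proof (induction S rule: finite_induct)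
    case empty then show ?case by simp
  next
    case (insert j S)
    define P where "P = y + (\<Sum>i\<in>S. (d$i) *\<^sub>R axis i 1)"
    have eq: "y + (\<Sum>i\<in>insert j S. (d$i) *\<^sub>R axis i 1) = P + (d$j) *\<^sub>R axis j 1"
      unfolding P_def using insert(1,2) by (simp add: add_ac)
    have "(Hxx (P + (d$j) *\<^sub>R axis j 1) s - Hxx y s) *v v =
          (Hxx (P + (d$j) *\<^sub>R axis j 1) s - Hxx P s) *v v + (Hxx P s - Hxx y s) *v v"
      by (simp only: matrix_vector_mult_diff_rdistrib) simp
    then have "norm ((Hxx (P + (d$j) *\<^sub>R axis j 1) s - Hxx y s) *v v) \<le>
        norm ((Hxx (P + (d$j) *\<^sub>R axis j 1) s - Hxx P s) *v v) + norm ((Hxx P s - Hxx y s) *v v)"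
      by (metis norm_triangle_ineq)
    also have "\<dots> \<le> Cxxx * \<bar>d$j\<bar> * norm v + Cxxx * (\<Sum>i\<in>S. \<bar>d$i\<bar>) * norm v"
      apply (rule add_mono)
       apply (rule H_axis[OF s])
      using insert.IH unfolding P_def .
    also have "\<dots> = Cxxx * (\<Sum>i\<in>insert j S. \<bar>d$i\<bar>) * norm v"
      using insert(1,2) by (simp add: distrib_left distrib_right)
    finally show ?case unfolding eq .
  qed
  have "(\<Sum>i\<in>UNIV. (d$i) *\<^sub>R axis i 1) = d"
    using basis_expansion[of d] by (simp only: scalar_mult_eq_scaleR)
  then have "y + (\<Sum>i\<in>UNIV. (d$i) *\<^sub>R axis i 1) = y'" unfolding d_def by simp
  with main[of UNIV] show ?thesis unfolding l1norm_def d_def by simp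
qed

lemma H_t:
  assumes "s \<ge> 0" "s' \<ge> 0"
  shows "norm ((Hxx y s' - Hxx y s) *v v) \<le> Cxxt * \<bar>s' - s\<bar> * norm v"
proof -
  have "norm (Hxx y s' *v v - Hxx y s *v v) \<le> (Cxxt * norm v) * norm (s' - s)"
    apply (rule differentiable_bound[where S="{0..}" and f="\<lambda>r. Hxx y r *v v"
          and f'="\<lambda>r h. h *\<^sub>R (Hxxt y r *v v)"])
    using assms vd_matvec[OF d_Hxxt] bnd_xxt
    by (auto simp: onorm_scale_vec has_vector_derivative_def intro!: matvec_norm)
  then show ?thesis by (simp add: matrix_vector_mult_diff_rdistrib mult_ac)
qed

lemma gxt_t:
  assumes "s \<ge> 0" "s' \<ge> 0"
  shows "norm (gxt y s' - gxt y s) \<le> Cxtt * \<bar>s' - s\<bar>"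
proof -
  have "norm (gxt y s' - gxt y s) \<le> Cxtt * norm (s' - s)"
    apply (rule differentiable_bound[where S="{0..}" and f="\<lambda>r. gxt y r"
          and f'="\<lambda>r h. h *\<^sub>R (gxtt y r)"])
    using assms d_gxtt bnd_xtt
    by (auto simp: onorm_scale_vec has_vector_derivative_def)
  then show ?thesis by simp
qed

lemma H_lip:
  assumes "s \<ge> 0" "s' \<ge> 0"
  shows "norm ((Hxx y' s' - Hxx y s) *v v) \<le> (Cxxx * l1norm (y' - y) + Cxxt * \<bar>s' - s\<bar>) * norm v"
proof -
  have "(Hxx y' s' - Hxx y s) *v v = (Hxx y' s' - Hxx y s') *v v + (Hxx y s' - Hxx y s) *v v"
    by (simp only: matrix_vector_mult_diff_rdistrib) simp
  then have "norm ((Hxx y' s' - Hxx y s) *v v) \<le> norm ((Hxx y' s' - Hxx y s') *v v) + norm ((Hxx y s' - Hxx y s) *v v)"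
    by (metis norm_triangle_ineq)
  also have "\<dots> \<le> Cxxx * l1norm (y' - y) * norm v + Cxxt * \<bar>s' - s\<bar> * norm v"
    by (rule add_mono) (rule H_x, fact, rule H_t, fact+)
  finally show ?thesis by (simp add: distrib_right)
qed

end




context setting begin

lemma gx_cont_t: "continuous_on {0..} (\<lambda>r. gx y r)"
  unfolding continuous_on_eq_continuous_within
  using d_gxt has_vector_derivative_continuous by fastforce

lemma partA:
  assumes s: "s \<ge> 0" and sh: "s + h \<ge> 0"
  shows "norm (gx (z + h *\<^sub>R v) (s+h) - gx z (s+h) - h *\<^sub>R (Hxx z s *v v))
    \<le> (Cxxx * l1norm v * norm v) * h^2/2 + (Cxxt * \<bar>h\<bar> * norm v) * \<bar>h\<bar>"
proof -
  let ?f = "\<lambda>r. gx (z + r *\<^sub>R v) (s+h) - r *\<^sub>R (Hxx z s *v v)"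
  let ?f' = "\<lambda>r. Hxx (z + r *\<^sub>R v) (s+h) *v v - Hxx z s *v v"
  have der: "(?f has_vector_derivative ?f' r) (at r)" for r
  proof -
    have d1: "((\<lambda>r. z + r *\<^sub>R v) has_derivative (\<lambda>q. q *\<^sub>R v)) (at r)"
      by (auto intro!: derivative_eq_intros)
    have "((\<lambda>r. gx (z + r *\<^sub>R v) (s+h)) has_derivative (\<lambda>q. Hxx (z + r *\<^sub>R v) (s+h) *v (q *\<^sub>R v))) (at r)"
      by (rule has_derivative_compose[OF d1 hess[OF sh]])
    then have "((\<lambda>r. gx (z + r *\<^sub>R v) (s+h)) has_vector_derivative (Hxx (z + r *\<^sub>R v) (s+h) *v v)) (at r)"
      by (simp add: has_vector_derivative_def matrix_vector_mult_scaleR)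
    then show ?thesis
      by (auto intro!: derivative_eq_intros)
  qed
  have cont: "continuous_on (closed_segment 0 h) ?f"
    using der by (meson continuous_at_imp_continuous_on has_vector_derivative_continuous)
  have "norm (?f h - ?f 0) \<le> (Cxxx * l1norm v * norm v) * h^2/2 + (Cxxt * \<bar>h\<bar> * norm v) * \<bar>h\<bar>"
  proof (rule var_bound[OF cont der])
    fix r
    have "norm (?f' r) = norm ((Hxx (z + r *\<^sub>R v) (s+h) - Hxx z s) *v v)"
      by (simp add: matrix_vector_mult_diff_rdistrib)
    also have "\<dots> \<le> (Cxxx * l1norm ((z + r *\<^sub>R v) - z) + Cxxt * \<bar>(s+h) - s\<bar>) * norm v"
      by (rule H_lip[OF s sh])
    also have "\<dots> = (Cxxx * l1norm v * norm v) * \<bar>r\<bar> + Cxxt * \<bar>h\<bar> * norm v"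
      by (simp add: l1norm_scale algebra_simps)
    finally show "norm (?f' r) \<le> (Cxxx * l1norm v * norm v) * \<bar>r\<bar> + Cxxt * \<bar>h\<bar> * norm v" .
  qed
  then show ?thesis by (simp add: algebra_simps)
qed

lemma partB:
  assumes s: "s \<ge> 0" and sh: "s + h \<ge> 0"
  shows "norm (gx z (s+h) - gx z s - h *\<^sub>R gxt z s) \<le> Cxtt * h^2/2"
proof -
  let ?f = "\<lambda>r. gx z (s + r) - r *\<^sub>R gxt z s"
  let ?f' = "\<lambda>r. gxt z (s + r) - gxt z s"
  have seg: "r \<in> closed_segment 0 h \<Longrightarrow> s + r \<ge> 0" for r
    using s sh by (auto simp: closed_segment_eq_real_ivl split: if_splits)
  have oseg: "r \<in> open_segment 0 h \<Longrightarrow> s + r > 0" for r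
    using s sh by (auto simp: open_segment_eq_real_ivl split: if_splits)
  have cont: "continuous_on (closed_segment 0 h) ?f"
  proof -
    have "continuous_on (closed_segment 0 h) (\<lambda>r. gx z (s + r))"
      by (rule continuous_on_compose2[OF gx_cont_t[of z]]) (auto intro!: continuous_intros dest: seg)
    then show ?thesis by (auto intro!: continuous_intros)
  qed
  have der: "(?f has_vector_derivative ?f' r) (at r)" if r: "r \<in> open_segment 0 h" for r
  proof -
    have "((\<lambda>q. gx z q) has_vector_derivative gxt z (s + r)) (at (s + r) within {0..})"
      using d_gxt oseg[OF r] by simp
    moreover have "at (s + r) within {0..} = at (s + r)"
      using oseg[OF r] by (intro at_within_interior) auto
    ultimately have "((\<lambda>q. gx z q) has_vector_derivative gxt z (s + r)) (at (s + r))" by simp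
    from vd_shift[OF this] show ?thesis
      by (auto intro!: derivative_eq_intros)
  qed
  have "norm (?f h - ?f 0) \<le> Cxtt * h^2/2 + 0 * \<bar>h\<bar>"
  proof (rule var_bound[OF cont der])
    fix r assume r: "r \<in> open_segment 0 h"
    show "norm (?f' r) \<le> Cxtt * \<bar>r\<bar> + 0"
      using gxt_t[OF s, of "s + r" z] oseg[OF r] by simp
  qed
  then show ?thesis by (simp add: algebra_simps)
qed

end



context setting begin

definition "bb v = (Cxxx * l1norm v + 2*Cxxt)*norm v + Cxtt"
definition "GG y0 v t0 r = gx (y0 + r *\<^sub>R v) (t0 + r)"
definition "LL y0 v t0 r = Hxx (y0 + r *\<^sub>R v) (t0 + r) *v v + gxt (y0 + r *\<^sub>R v) (t0 + r)"

lemma taylor: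
  assumes s: "s \<ge> 0" and sh: "s + h \<ge> 0"
  shows "norm (gx (z + h *\<^sub>R v) (s+h) - gx z s - h *\<^sub>R (Hxx z s *v v + gxt z s)) \<le> bb v * h^2/2"
proof -
  have eq: "gx (z + h *\<^sub>R v) (s+h) - gx z s - h *\<^sub>R (Hxx z s *v v + gxt z s) =
     (gx (z + h *\<^sub>R v) (s+h) - gx z (s+h) - h *\<^sub>R (Hxx z s *v v)) + (gx z (s+h) - gx z s - h *\<^sub>R gxt z s)"
    by (simp add: algebra_simps)
  have "norm (gx (z + h *\<^sub>R v) (s+h) - gx z s - h *\<^sub>R (Hxx z s *v v + gxt z s)) \<le>
     norm (gx (z + h *\<^sub>R v) (s+h) - gx z (s+h) - h *\<^sub>R (Hxx z s *v v)) + norm (gx z (s+h) - gx z s - h *\<^sub>R gxt z s)"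
    unfolding eq by (rule norm_triangle_ineq)
  also have "\<dots> \<le> ((Cxxx * l1norm v * norm v) * h^2/2 + (Cxxt * \<bar>h\<bar> * norm v) * \<bar>h\<bar>) + Cxtt * h^2/2"
    by (rule add_mono[OF partA[OF s sh] partB[OF s sh]])
  also have "\<dots> = bb v * h^2/2"
    unfolding bb_def by (simp add: algebra_simps power2_eq_square abs_mult_self_eq)
  finally show ?thesis .
qed

lemma taylorG:
  assumes "t0 + p \<ge> 0" "t0 + q \<ge> 0"
  shows "norm (GG y0 v t0 q - GG y0 v t0 p - (q - p) *\<^sub>R LL y0 v t0 p) \<le> bb v * (q - p)^2/2"
proof -
  have "norm (gx ((y0 + p *\<^sub>R v) + (q - p) *\<^sub>R v) ((t0 + p) + (q - p)) - gx (y0 + p *\<^sub>R v) (t0 + p)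
     - (q - p) *\<^sub>R (Hxx (y0 + p *\<^sub>R v) (t0 + p) *v v + gxt (y0 + p *\<^sub>R v) (t0 + p))) \<le> bb v * (q - p)^2/2"
    by (rule taylor) (use assms in auto)
  moreover have "(y0 + p *\<^sub>R v) + (q - p) *\<^sub>R v = y0 + q *\<^sub>R v" by (simp add: algebra_simps)
  moreover have "(t0 + p) + (q - p) = t0 + q" by simp
  ultimately show ?thesis unfolding GG_def LL_def by simp
qed

lemma LL_bound:
  assumes "t0 + r \<ge> 0"
  shows "norm (LL y0 v t0 r) \<le> Cxx * norm v + Cxt"
proof -
  have "norm (LL y0 v t0 r) \<le> norm (Hxx (y0 + r *\<^sub>R v) (t0 + r) *v v) + norm (gxt (y0 + r *\<^sub>R v) (t0 + r))"
    unfolding LL_def by (rule norm_triangle_ineq)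
  also have "\<dots> \<le> Cxx * norm v + Cxt"
    using assms by (intro add_mono matvec_norm bnd_xx bnd_xt)
  finally show ?thesis .
qed

lemma LL_lip:
  assumes p: "t0 + p \<ge> 0" and q: "t0 + q \<ge> 0"
  shows "norm (LL y0 v t0 q - LL y0 v t0 p) \<le> bb v * \<bar>q - p\<bar>"
proof (cases "q = p")
  case True then show ?thesis by simp
next
  case False
  have e1: "norm (GG y0 v t0 q - GG y0 v t0 p - (q - p) *\<^sub>R LL y0 v t0 p) \<le> bb v * (q - p)^2/2"
    by (rule taylorG[OF p q])
  have e2: "norm (GG y0 v t0 p - GG y0 v t0 q - (p - q) *\<^sub>R LL y0 v t0 q) \<le> bb v * (p - q)^2/2"
    by (rule taylorG[OF q p])
  have "(q - p) *\<^sub>R (LL y0 v t0 q - LL y0 v t0 p) =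
     (GG y0 v t0 q - GG y0 v t0 p - (q - p) *\<^sub>R LL y0 v t0 p) + (GG y0 v t0 p - GG y0 v t0 q - (p - q) *\<^sub>R LL y0 v t0 q)"
    by (simp add: algebra_simps)
  then have "\<bar>q - p\<bar> * norm (LL y0 v t0 q - LL y0 v t0 p) \<le> bb v * (q - p)^2/2 + bb v * (p - q)^2/2"
    by (metis (no_types, lifting) add_mono e1 e2 norm_scaleR norm_triangle_le)
  also have "\<dots> = \<bar>q - p\<bar> * (bb v * \<bar>q - p\<bar>)"
  proof -
    have sq: "(q - p)^2 = \<bar>q - p\<bar> * \<bar>q - p\<bar>" "(p - q)^2 = \<bar>q - p\<bar> * \<bar>q - p\<bar>"
      by (simp add: abs_mult_self_eq power2_eq_square, simp add: abs_mult_self_eq power2_eq_square algebra_simps)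
    have gen: "\<And>B d::real. B*(d*d)/2 + B*(d*d)/2 = d*(B*d)" by (simp add: algebra_simps)
    show ?thesis unfolding sq by (rule gen)
  qed
  finally show ?thesis using False by simp
qed

lemma GG_deriv:
  assumes p: "t0 + p \<ge> 0"
  shows "(GG y0 v t0 has_vector_derivative LL y0 v t0 p) (at p within {r. t0 + r \<ge> 0})"
  unfolding has_vector_derivative_def has_derivative_iff_norm
proof (intro conjI)
  show "bounded_linear (\<lambda>x. x *\<^sub>R LL y0 v t0 p)" by (rule bounded_linear_scaleR_left)
  show "((\<lambda>y. norm (GG y0 v t0 y - GG y0 v t0 p - (y - p) *\<^sub>R LL y0 v t0 p) / norm (y - p)) \<longlongrightarrow> 0)
        (at p within {r. t0 + r \<ge> 0})"
  proof (rule Lim_null_comparison)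
    show "\<forall>\<^sub>F y in at p within {r. t0 + r \<ge> 0}.
      norm (norm (GG y0 v t0 y - GG y0 v t0 p - (y - p) *\<^sub>R LL y0 v t0 p) / norm (y - p)) \<le> bb v * \<bar>y - p\<bar> / 2"
      unfolding eventually_at_filter
    proof (intro always_eventually allI impI)
      fix y assume "y \<noteq> p" "y \<in> {r. t0 + r \<ge> 0}"
      then have y: "t0 + y \<ge> 0" "y \<noteq> p" by auto
      have "norm (GG y0 v t0 y - GG y0 v t0 p - (y - p) *\<^sub>R LL y0 v t0 p) \<le> bb v * (y - p)^2/2"
        by (rule taylorG[OF p y(1)])
      also have "\<dots> = (bb v * \<bar>y - p\<bar> / 2) * \<bar>y - p\<bar>"
        by (simp add: power2_eq_square abs_mult_self_eq)
      finally show "norm (norm (GG y0 v t0 y - GG y0 v t0 p - (y - p) *\<^sub>R LL y0 v t0 p) / norm (y - p)) \<le> bb v * \<bar>y - p\<bar> / 2"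
        using y by (simp add: divide_le_eq)
    qed
    show "((\<lambda>y. bb v * \<bar>y - p\<bar> / 2) \<longlongrightarrow> 0) (at p within {r. t0 + r \<ge> 0})"
      by (auto intro!: tendsto_eq_intros)
  qed
qed

end



lemma sqrt_V: "sqrt (2 * (norm g^2/2)) = norm g"
  by simp

lemma pw_quad:
  fixes g0 G L :: "'a::real_inner"
  assumes u: "u \<ge> 0" and al: "\<alpha> > 0" and a: "a \<ge> 0" and b: "b \<ge> 0"
    and hG: "norm (G - g0) \<le> a*u" and hL: "norm (L - (-\<alpha>) *\<^sub>R g0) \<le> b*u" and hLb: "norm L \<le> a"
  shows "G \<bullet> L \<le> phi_quad \<alpha> a b (norm g0^2/2) u"
proof -
  have id: "G \<bullet> L = g0 \<bullet> ((-\<alpha>) *\<^sub>R g0) + g0 \<bullet> (L - (-\<alpha>) *\<^sub>R g0) + (G - g0) \<bullet> L"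
    by (simp add: inner_simps)
  have t1: "g0 \<bullet> ((-\<alpha>) *\<^sub>R g0) = - \<alpha> * norm g0^2"
    by (simp add: power2_norm_eq_inner)
  have t2: "g0 \<bullet> (L - (-\<alpha>) *\<^sub>R g0) \<le> norm g0 * (b*u)"
    by (meson hL mult_left_mono norm_cauchy_schwarz norm_ge_zero order_trans)
  have t3: "(G - g0) \<bullet> L \<le> (a*u) * a"
    by (meson hG hLb mult_mono norm_cauchy_schwarz norm_ge_zero order_trans a u mult_nonneg_nonneg)
  have "G \<bullet> L \<le> - \<alpha> * norm g0^2 + norm g0 * (b*u) + (a*u)*a"
    using id t1 t2 t3 by linarith
  also have "\<dots> \<le> phi_quad \<alpha> a b (norm g0^2/2) u"
    unfolding phi_quad_def sqrt_V using a b u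
    by (simp add: algebra_simps power2_eq_square)
  finally show ?thesis .
qed

lemma pw_cub:
  fixes g0 G L :: "'a::real_inner"
  assumes u: "u \<ge> 0" and al: "\<alpha> > 0" and b: "b \<ge> 0"
    and hL: "norm (L - (-\<alpha>) *\<^sub>R g0) \<le> b*u"
    and hR: "norm (G - g0 - u *\<^sub>R ((-\<alpha>) *\<^sub>R g0)) \<le> b*u^2/2"
  shows "G \<bullet> L \<le> phi_cub \<alpha> b (norm g0^2/2) u"
proof -
  define L0 where "L0 = (-\<alpha>) *\<^sub>R g0"
  define R where "R = G - g0 - u *\<^sub>R L0"
  define R' where "R' = L - L0"
  define n where "n = norm g0"
  have n0: "n \<ge> 0" unfolding n_def by simp
  have hR': "norm R' \<le> b*u" using hL unfolding R'_def L0_def .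
  have hR2: "norm R \<le> b*u^2/2" using hR unfolding R_def L0_def .
  have nL0: "norm L0 = \<alpha> * n" unfolding L0_def n_def using al by simp
  have G_eq: "G = (1 - \<alpha>*u) *\<^sub>R g0 + R" unfolding R_def L0_def by (simp add: algebra_simps)
  have L_eq: "L = L0 + R'" unfolding R'_def by simp
  have id: "G \<bullet> L = (1 - \<alpha>*u) * (g0 \<bullet> L0) + (1 - \<alpha>*u) * (g0 \<bullet> R') + R \<bullet> L0 + R \<bullet> R'"
    unfolding G_eq L_eq by (simp add: inner_simps algebra_simps)
  have t1: "g0 \<bullet> L0 = - \<alpha> * n^2"
    unfolding L0_def n_def by (simp add: power2_norm_eq_inner)
  have t2: "(1 - \<alpha>*u) * (g0 \<bullet> R') \<le> (1 + \<alpha>*u) * (n * (b*u))"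
  proof -
    have "(1 - \<alpha>*u) * (g0 \<bullet> R') \<le> \<bar>1 - \<alpha>*u\<bar> * \<bar>g0 \<bullet> R'\<bar>"
      by (metis abs_ge_self abs_mult)
    also have "\<dots> \<le> (1 + \<alpha>*u) * (n * (b*u))"
    proof (rule mult_mono)
      show "\<bar>1 - \<alpha>*u\<bar> \<le> 1 + \<alpha>*u" using al u by (simp add: abs_le_iff)
      show "\<bar>g0 \<bullet> R'\<bar> \<le> n * (b*u)"
        unfolding n_def by (meson Cauchy_Schwarz_ineq2 hR' mult_left_mono norm_ge_zero order_trans)
    qed (use al u in auto)
    finally show ?thesis .
  qed
  have t3: "R \<bullet> L0 \<le> (b*u^2/2) * (\<alpha> * n)"
    by (metis hR2 nL0 mult_right_mono norm_cauchy_schwarz norm_ge_zero order_trans)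
  have t4: "R \<bullet> R' \<le> (b*u^2/2) * (b*u)"
    by (meson hR2 hR' mult_mono norm_cauchy_schwarz norm_ge_zero order_trans)
  have "G \<bullet> L \<le> (1 - \<alpha>*u) * (- \<alpha> * n^2) + (1 + \<alpha>*u) * (n * (b*u)) + (b*u^2/2) * (\<alpha> * n) + (b*u^2/2) * (b*u)"
  proof -
    have "G \<bullet> L = (1 - \<alpha>*u) * (- \<alpha> * n^2) + (1 - \<alpha>*u) * (g0 \<bullet> R') + R \<bullet> L0 + R \<bullet> R'"
      using id t1 by simp
    then show ?thesis using t2 t3 t4 by linarith
  qed
  also have "\<dots> = phi_cub \<alpha> b (norm g0^2/2) u"
    unfolding phi_cub_def sqrt_V n_def[symmetric]
    using n0 by (simp add: algebra_simps power2_eq_square power3_eq_cube)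
  finally show ?thesis .
qed




definition Phi_quad :: "real \<Rightarrow> real \<Rightarrow> real \<Rightarrow> real \<Rightarrow> real \<Rightarrow> real" where
  "Phi_quad \<alpha> a b V0 u = a * b * u^3/6 + (a^2 + b * sqrt (2 * V0)) * u^2/2 - 2 * \<alpha> * V0 * u"
definition Phi_cub :: "real \<Rightarrow> real \<Rightarrow> real \<Rightarrow> real \<Rightarrow> real" where
  "Phi_cub \<alpha> b V0 u = b^2 * u^4/8 + \<alpha> * sqrt (2 * V0) * b * u^3/2 + (sqrt (2 * V0) * b + 2 * \<alpha>^2 * V0) * u^2/2 - 2 * \<alpha> * V0 * u"
definition phiF :: "bool \<Rightarrow> real \<Rightarrow> real \<Rightarrow> real \<Rightarrow> real \<Rightarrow> real \<Rightarrow> real" where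
  "phiF cubic \<alpha> a b V0 u = (if cubic then phi_cub \<alpha> b V0 u else phi_quad \<alpha> a b V0 u)"
definition PhiF :: "bool \<Rightarrow> real \<Rightarrow> real \<Rightarrow> real \<Rightarrow> real \<Rightarrow> real \<Rightarrow> real" where
  "PhiF cubic \<alpha> a b V0 u = (if cubic then Phi_cub \<alpha> b V0 u else Phi_quad \<alpha> a b V0 u)"

lemma PhiF_deriv: "(PhiF cubic \<alpha> a b V0 has_real_derivative phiF cubic \<alpha> a b V0 u) (at u)"
  unfolding PhiF_def phiF_def Phi_quad_def Phi_cub_def phi_quad_def phi_cub_def
  by (cases cubic) (auto intro!: derivative_eq_intros simp: power2_eq_square power3_eq_cube algebra_simps)

context setting begin

lemma GG_cont: "continuous_on {r. t0 + r \<ge> 0} (GG y0 v t0)"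
  unfolding continuous_on_eq_continuous_within
proof
  fix x assume "x \<in> {r. t0 + r \<ge> 0}"
  then show "continuous (at x within {r. t0 + r \<ge> 0}) (GG y0 v t0)"
    by (intro has_vector_derivative_continuous[OF GG_deriv]) simp
qed

lemma GG_at:
  assumes "t0 + x > 0"
  shows "(GG y0 v t0 has_vector_derivative LL y0 v t0 x) (at x)"
proof -
  have x0: "0 \<le> t0 + x" using assms by simp
  have sub: "{r. t0 + r > 0} \<subseteq> {r. t0 + r \<ge> 0}" by auto
  have d: "(GG y0 v t0 has_vector_derivative LL y0 v t0 x) (at x within {r. t0 + r > 0})"
    by (rule has_vector_derivative_within_subset[OF GG_deriv[OF x0] sub])
  moreover have "open {r::real. t0 + r > 0}"
  proof -
    have "{r::real. t0 + r > 0} = {-t0<..}" by (auto simp: algebra_simps)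
    then show ?thesis by simp
  qed
  then have "at x within {r. t0 + r > 0} = at x"
    by (intro at_within_open) (use assms in auto)
  with d show ?thesis by simp
qed

lemma step_main:
  assumes t0: "t0 \<ge> 0" and al: "\<alpha> > 0"
    and L0: "LL y0 v t0 0 = (-\<alpha>) *\<^sub>R gx y0 t0"
    and a: "a = Cxx * norm v + Cxt" and b: "b = bb v"
    and cpos: "Cxx \<ge> 0" "Cxt \<ge> 0" "Cxxt \<ge> 0" "Cxtt \<ge> 0" "Cxxx \<ge> 0"
    and u: "u \<ge> 0"
  shows "norm (GG y0 v t0 u)^2/2 \<le> norm (gx y0 t0)^2/2 + PhiF cubic \<alpha> a b (norm (gx y0 t0)^2/2) u"
proof -
  let ?g0 = "gx y0 t0"
  let ?V0 = "norm (gx y0 t0)^2/2"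
  let ?W = "\<lambda>r. norm (GG y0 v t0 r)^2/2 - PhiF cubic \<alpha> a b ?V0 r"
  have G0: "GG y0 v t0 0 = ?g0" unfolding GG_def by simp
  have a0: "a \<ge> 0" unfolding a using cpos by simp
  have b0: "b \<ge> 0" unfolding b bb_def using cpos l1norm_nonneg[of v] by simp
  have cW: "continuous_on {0..u} ?W"
  proof -
    have "continuous_on {0..u} (GG y0 v t0)"
      by (rule continuous_on_subset[OF GG_cont]) (use t0 in auto)
    moreover have "continuous_on {0..u} (PhiF cubic \<alpha> a b ?V0)"
      by (intro continuous_at_imp_continuous_on ballI DERIV_continuous[OF PhiF_deriv])
    ultimately show ?thesis by (intro continuous_intros) auto
  qed
  have "?W u \<le> ?W 0"
  proof (rule DERIV_nonpos_imp_decreasing_open[OF u _ cW])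
    fix x assume x: "0 < x" "x < u"
    have dG: "(GG y0 v t0 has_vector_derivative LL y0 v t0 x) (at x)"
      by (rule GG_at) (use t0 x in auto)
    have dGG: "(GG y0 v t0 has_derivative (\<lambda>h. h *\<^sub>R LL y0 v t0 x)) (at x)"
      using dG by (simp add: has_vector_derivative_def)
    have d1: "((\<lambda>r. GG y0 v t0 r \<bullet> GG y0 v t0 r) has_real_derivative 2 * (GG y0 v t0 x \<bullet> LL y0 v t0 x)) (at x)"
      unfolding has_field_derivative_def
      by (rule has_derivative_eq_rhs[OF has_derivative_inner[OF dGG dGG]])
         (auto simp: fun_eq_iff inner_commute algebra_simps)
    have d2: "((\<lambda>r. (GG y0 v t0 r \<bullet> GG y0 v t0 r) / 2 - PhiF cubic \<alpha> a b ?V0 r) has_real_derivative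
       2 * (GG y0 v t0 x \<bullet> LL y0 v t0 x) / 2 - phiF cubic \<alpha> a b ?V0 x) (at x)"
      by (intro DERIV_diff DERIV_cdivide d1 PhiF_deriv)
    have feq: "(\<lambda>r. (GG y0 v t0 r \<bullet> GG y0 v t0 r) / 2 - PhiF cubic \<alpha> a b ?V0 r) = ?W"
      by (simp add: power2_norm_eq_inner)
    have D: "(?W has_real_derivative (GG y0 v t0 x \<bullet> LL y0 v t0 x - phiF cubic \<alpha> a b ?V0 x)) (at x)"
      using d2 unfolding feq by simp
    have x0: "x \<ge> 0" "t0 + x \<ge> 0" using x t0 by auto
    have hG: "norm (GG y0 v t0 x - ?g0) \<le> a * x"
    proof -
      have "norm (GG y0 v t0 x - GG y0 v t0 0) \<le> a * norm (x - 0)"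
      proof (rule differentiable_bound[where S="{0..x}" and f'="\<lambda>r h. h *\<^sub>R LL y0 v t0 r"])
        fix r assume r: "r \<in> {0..x}"
        show "(GG y0 v t0 has_derivative (\<lambda>h. h *\<^sub>R LL y0 v t0 r)) (at r within {0..x})"
        proof -
          have sub: "{0..x} \<subseteq> {r. 0 \<le> t0 + r}" using t0 by auto
          have "0 \<le> t0 + r" using r t0 by auto
          from has_vector_derivative_within_subset[OF GG_deriv[OF this, of y0 v] sub]
          show ?thesis by (simp add: has_vector_derivative_def)
        qed
        show "onorm (\<lambda>h. h *\<^sub>R LL y0 v t0 r) \<le> a"
          unfolding onorm_scale_vec a by (rule LL_bound) (use r t0 in auto)
      qed (use x0 in auto)
      then show ?thesis using G0 x0 by simp
    qed
    have hL: "norm (LL y0 v t0 x - (-\<alpha>) *\<^sub>R ?g0) \<le> b * x"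
    proof -
      have "norm (LL y0 v t0 x - LL y0 v t0 0) \<le> bb v * \<bar>x - 0\<bar>"
        by (rule LL_lip) (use x0 t0 in auto)
      then show ?thesis unfolding L0 b using x0 by simp
    qed
    have hLb: "norm (LL y0 v t0 x) \<le> a"
      unfolding a by (rule LL_bound) (use x0 in auto)
    have hR: "norm (GG y0 v t0 x - ?g0 - x *\<^sub>R ((-\<alpha>) *\<^sub>R ?g0)) \<le> b * x^2/2"
    proof -
      have "norm (GG y0 v t0 x - GG y0 v t0 0 - (x - 0) *\<^sub>R LL y0 v t0 0) \<le> bb v * (x - 0)^2/2"
        by (rule taylorG) (use x0 t0 in auto)
      then show ?thesis unfolding L0 b G0 by simp
    qed
    have pw: "GG y0 v t0 x \<bullet> LL y0 v t0 x \<le> phiF cubic \<alpha> a b ?V0 x"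
      unfolding phiF_def using pw_quad[OF x0(1) al a0 b0 hG hL hLb] pw_cub[OF x0(1) al b0 hL hR]
      by simp
    show "\<exists>y. DERIV ?W x :> y \<and> y \<le> 0"
      using D pw by (intro exI[of _ "GG y0 v t0 x \<bullet> LL y0 v t0 x - phiF cubic \<alpha> a b ?V0 x"]) simp
  qed
  moreover have "PhiF cubic \<alpha> a b ?V0 0 = 0"
    unfolding PhiF_def Phi_quad_def Phi_cub_def by simp
  ultimately show ?thesis using G0 by simp
qed

end



lemma phiF_cont: "continuous_on S (phiF cubic \<alpha> a b V0)"
  unfolding phiF_def phi_quad_def phi_cub_def by (cases cubic) (auto intro!: continuous_intros)

lemma PhiF_0[simp]: "PhiF cubic \<alpha> a b V0 0 = 0"
  unfolding PhiF_def Phi_quad_def Phi_cub_def by simp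

lemma phiF_0: "phiF cubic \<alpha> a b V0 0 = - 2 * \<alpha> * V0"
  unfolding phiF_def phi_quad_def phi_cub_def by simp

lemma PhiF_mono:
  assumes "u1 \<le> u2" "\<And>u. u1 \<le> u \<Longrightarrow> u \<le> u2 \<Longrightarrow> phiF cubic \<alpha> a b V0 u \<le> 0"
  shows "PhiF cubic \<alpha> a b V0 u2 \<le> PhiF cubic \<alpha> a b V0 u1"
  using assms(1) proof (rule DERIV_nonpos_imp_nonincreasing)
  fix x assume "u1 \<le> x" "x \<le> u2"
  then show "\<exists>y. DERIV (PhiF cubic \<alpha> a b V0) x :> y \<and> y \<le> 0"
    using PhiF_deriv assms(2) by blast
qed

lemma big_neg:
  assumes V0: "V0 > 0" and al: "\<alpha> > 0"
    and nz: "\<And>u. 0 < u \<Longrightarrow> u < D \<Longrightarrow> phiF cubic \<alpha> a b V0 u \<noteq> 0"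
    and u: "0 \<le> u" "u < D"
  shows "phiF cubic \<alpha> a b V0 u < 0"
proof (rule ccontr)
  assume "\<not> ?thesis"
  then have ge: "phiF cubic \<alpha> a b V0 u \<ge> 0" by simp
  have f0: "phiF cubic \<alpha> a b V0 0 < 0" using phiF_0 V0 al by simp
  obtain c where c: "0 \<le> c" "c \<le> u" "phiF cubic \<alpha> a b V0 c = 0"
    using IVT'[of "phiF cubic \<alpha> a b V0" 0 0 u, OF less_imp_le[OF f0] ge u(1) phiF_cont] by blast
  then have "c \<noteq> 0" using f0 by auto
  then have "0 < c" "c < D" using c u by auto
  then show False using nz c(3) by blast
qed

lemma small_lt:
  assumes V0: "V0 < \<epsilon>"
    and nz: "\<And>u. 0 < u \<Longrightarrow> u < D \<Longrightarrow> V0 + PhiF cubic \<alpha> a b V0 u \<noteq> \<epsilon>"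
    and u: "0 \<le> u" "u < D"
  shows "V0 + PhiF cubic \<alpha> a b V0 u < \<epsilon>"
proof (rule ccontr)
  assume "\<not> ?thesis"
  then have ge: "V0 + PhiF cubic \<alpha> a b V0 u \<ge> \<epsilon>" by simp
  have cont: "continuous_on {0..u} (\<lambda>r. V0 + PhiF cubic \<alpha> a b V0 r)"
    by (intro continuous_intros continuous_at_imp_continuous_on ballI DERIV_continuous[OF PhiF_deriv])
  obtain c where c: "0 \<le> c" "c \<le> u" "V0 + PhiF cubic \<alpha> a b V0 c = \<epsilon>"
    using IVT'[of "\<lambda>r. V0 + PhiF cubic \<alpha> a b V0 r" 0 \<epsilon> u, OF _ ge u(1) cont] V0 by auto
  then have "c \<noteq> 0" using V0 by auto
  then have "0 < c" "c < D" using c u by auto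
  then show False using nz c(3) by blast
qed

lemma integral_PhiF:
  assumes "u \<ge> 0"
  shows "integral {c..c+u} (\<lambda>s. phiF cubic \<alpha> a b V0 (s - c)) = PhiF cubic \<alpha> a b V0 u"
proof -
  have "((\<lambda>s. phiF cubic \<alpha> a b V0 (s - c)) has_integral
      (PhiF cubic \<alpha> a b V0 ((c+u) - c) - PhiF cubic \<alpha> a b V0 (c - c))) {c..c+u}"
  proof (rule fundamental_theorem_of_calculus)
    fix s assume "s \<in> {c..c+u}"
    have "((\<lambda>s. PhiF cubic \<alpha> a b V0 (s - c)) has_real_derivative phiF cubic \<alpha> a b V0 (s - c)) (at s)"
    proof -
      have "((\<lambda>s. s - c) has_real_derivative 1) (at s)" by (auto intro!: derivative_eq_intros)
      from DERIV_chain2[OF PhiF_deriv this] show ?thesis by simp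
    qed
    then show "((\<lambda>s. PhiF cubic \<alpha> a b V0 (s - c)) has_vector_derivative phiF cubic \<alpha> a b V0 (s - c)) (at s within {c..c+u})"
      by (simp add: has_real_derivative_iff_has_vector_derivative has_vector_derivative_at_within)
  qed (use assms in simp)
  then show ?thesis by (simp add: integral_unique)
qed

lemma poly_bounds:
  fixes n :: real and g :: "'a::real_normed_vector"
  assumes al: "\<alpha> > 0" and a: "a \<ge> 0" and b: "b \<ge> 0" and u: "0 \<le> u" "u \<le> 1"
  defines "\<kappa> \<equiv> (a*b/2 + a^2 + b*n) + (b^2/2 + 3/2*\<alpha>*n*b + n*b + \<alpha>^2*n^2)"
  assumes n: "n = norm g" and V0: "V0 = norm g^2/2"
  shows "phiF cubic \<alpha> a b V0 u \<le> \<kappa> * u - 2*\<alpha>*V0"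
    and "PhiF cubic \<alpha> a b V0 u \<le> \<kappa> * u^2/2 - 2*\<alpha>*V0*u"
proof -
  have sq: "sqrt (2*V0) = n" unfolding n V0 by simp
  have n0: "n \<ge> 0" using n by simp
  have u2: "u^2 \<le> u" using u mult_left_le[of u u] by (simp add: power2_eq_square)
  have u3: "u^3 \<le> u^2" using u mult_left_le[of u "u*u"] by (simp add: power3_eq_cube power2_eq_square)
  have u4: "u^4 \<le> u^2" by (rule power_decreasing) (use u in auto)
  have u3': "u^3 \<le> u" using u2 u3 by linarith
  have V0n: "2 * V0 = n^2" using n V0 by simp
  have p1: "a*b/2*u^2 \<le> a*b/2*u" using a b u2 by (intro mult_left_mono) auto
  have p2: "b^2/2*u^3 \<le> b^2/2*u" using b u3' by (intro mult_left_mono) auto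
  have p3: "3/2*\<alpha>*n*b*u^2 \<le> 3/2*\<alpha>*n*b*u" using al n0 b u2 by (intro mult_left_mono) auto
  have k1: "0 \<le> (a*b/2 + a^2 + b*n)*u" using a b n0 u by simp
  have k2: "0 \<le> (b^2/2 + 3/2*\<alpha>*n*b + n*b + \<alpha>^2*n^2)*u" using al b n0 u by simp
  show "phiF cubic \<alpha> a b V0 u \<le> \<kappa> * u - 2*\<alpha>*V0"
  proof (cases cubic)
    case True
    have "phiF cubic \<alpha> a b V0 u = b^2/2*u^3 + 3/2*\<alpha>*n*b*u^2 + (n*b + \<alpha>^2*n^2)*u - 2*\<alpha>*V0"
      using True unfolding phiF_def phi_cub_def sq V0n[symmetric] by (simp add: algebra_simps)
    also have "\<dots> \<le> (b^2/2 + 3/2*\<alpha>*n*b + n*b + \<alpha>^2*n^2)*u - 2*\<alpha>*V0"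
      using p2 p3 by (simp add: algebra_simps)
    finally show ?thesis unfolding \<kappa>_def using k1 by (simp add: algebra_simps)
  next
    case False
    have "phiF cubic \<alpha> a b V0 u = a*b/2*u^2 + (a^2 + b*n)*u - 2*\<alpha>*V0"
      using False unfolding phiF_def phi_quad_def sq by (simp add: algebra_simps)
    also have "\<dots> \<le> (a*b/2 + a^2 + b*n)*u - 2*\<alpha>*V0"
      using p1 by (simp add: algebra_simps)
    finally show ?thesis unfolding \<kappa>_def using k2 by (simp add: algebra_simps)
  qed
  have q1: "a*b/6*u^3 \<le> a*b/4*u^2" using a b u3 u by (intro mult_mono) (auto simp: mult_nonneg_nonneg)
  have q2: "b^2/8*u^4 \<le> b^2/4*u^2" using b u4 u by (intro mult_mono) auto
  have q3: "\<alpha>*n*b/2*u^3 \<le> 3/4*\<alpha>*n*b*u^2" using al n0 b u3 u by (intro mult_mono) auto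
  have k3: "0 \<le> (a*b/2 + a^2 + b*n)*u^2/2" using a b n0 u by simp
  have k4: "0 \<le> (b^2/2 + 3/2*\<alpha>*n*b + n*b + \<alpha>^2*n^2)*u^2/2" using al b n0 u by simp
  show "PhiF cubic \<alpha> a b V0 u \<le> \<kappa> * u^2/2 - 2*\<alpha>*V0*u"
  proof (cases cubic)
    case True
    have "PhiF cubic \<alpha> a b V0 u = b^2/8*u^4 + \<alpha>*n*b/2*u^3 + (n*b + \<alpha>^2*n^2)*u^2/2 - 2*\<alpha>*V0*u"
      using True unfolding PhiF_def Phi_cub_def sq V0n[symmetric] by (simp add: algebra_simps)
    also have "\<dots> \<le> (b^2/2 + 3/2*\<alpha>*n*b + n*b + \<alpha>^2*n^2)*u^2/2 - 2*\<alpha>*V0*u"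
      using q2 q3 by (simp add: divide_simps algebra_simps)
    finally show ?thesis unfolding \<kappa>_def using k3 by (simp add: algebra_simps)
  next
    case False
    have "PhiF cubic \<alpha> a b V0 u = a*b/6*u^3 + (a^2 + b*n)*u^2/2 - 2*\<alpha>*V0*u"
      using False unfolding PhiF_def Phi_quad_def sq by (simp add: algebra_simps)
    also have "\<dots> \<le> (a*b/2 + a^2 + b*n)*u^2/2 - 2*\<alpha>*V0*u"
      using q1 by (simp add: divide_simps algebra_simps)
    finally show ?thesis unfolding \<kappa>_def using k4 by (simp add: algebra_simps)
  qed
qed




lemma inv_apply:
  fixes A :: "real^'n^'n"
  assumes m: "m > 0" and pd: "\<And>v. v \<bullet> (A *v v) \<ge> m * (v \<bullet> v)"
  shows "A *v (matrix_inv A *v w) = w"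
proof -
  have "\<forall>v. A *v v = 0 \<longrightarrow> v = 0"
  proof (intro allI impI)
    fix v assume "A *v v = 0"
    with pd[of v] have "m * (v \<bullet> v) \<le> 0" by simp
    with m have "v \<bullet> v \<le> 0" by (simp add: mult_le_0_iff)
    then show "v = 0" by (metis inner_eq_zero_iff inner_ge_zero order_antisym)
  qed
  then have "\<exists>B. B ** A = mat 1" by (simp add: matrix_left_invertible_ker)
  then have "invertible A" by (simp add: invertible_left_inverse)
  then have "A ** matrix_inv A = mat 1 \<and> matrix_inv A ** A = mat 1"
    unfolding invertible_def matrix_inv_def by (rule someI_ex)
  then show ?thesis by (simp add: matrix_vector_mul_assoc)
qed

lemma l1_bound: "l1norm (v::real^'n) \<le> real CARD('n) * norm v"
proof -
  have "l1norm v \<le> of_nat (card (UNIV::'n set)) * norm v"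
    unfolding l1norm_def by (rule sum_bounded_above) (simp add: component_le_norm_cart)
  then show ?thesis by simp
qed

lemma kappa_mono:
  fixes a b n A B N \<alpha> :: real
  assumes "0 \<le> a" "a \<le> A" "0 \<le> b" "b \<le> B" "0 \<le> n" "n \<le> N" "\<alpha> > 0"
  shows "(a*b/2 + a^2 + b*n) + (b^2/2 + 3/2*\<alpha>*n*b + n*b + \<alpha>^2*n^2)
      \<le> (A*B/2 + A^2 + B*N) + (B^2/2 + 3/2*\<alpha>*N*B + N*B + \<alpha>^2*N^2)"
proof -
  have 1: "a*b \<le> A*B" using assms by (intro mult_mono) auto
  have 2: "a^2 \<le> A^2" using assms by (intro power_mono) auto
  have 3: "b*n \<le> B*N" using assms by (intro mult_mono) auto
  have 4: "b^2 \<le> B^2" using assms by (intro power_mono) auto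
  have 5: "n^2 \<le> N^2" using assms by (intro power_mono) auto
  have 6: "\<alpha>*n*b \<le> \<alpha>*N*B" using assms 3 by (simp add: mult.assoc mult.commute[of n b] mult.commute[of N B])
  have 7: "\<alpha>^2*n^2 \<le> \<alpha>^2*N^2" using 5 by (intro mult_left_mono) auto
  show ?thesis using 1 2 3 4 6 7 by (simp add: mult.commute[of n b] mult.commute[of N B])
qed

theorem theorem2:
  fixes f :: "real^'n \<Rightarrow> real \<Rightarrow> real"
    and gx gxt gxtt :: "real^'n \<Rightarrow> real \<Rightarrow> real^'n"
    and Hxx Hxxt :: "real^'n \<Rightarrow> real \<Rightarrow> real^'n^'n"
    and Hxxx :: "'n \<Rightarrow> real^'n \<Rightarrow> real \<Rightarrow> real^'n^'n"
    and m Cxx Cxt Cxxt Cxtt Cxxx \<alpha> \<epsilon> :: real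
    and x0 :: "real^'n"
    and cubic :: bool
    and t :: "nat \<Rightarrow> real" and x xd :: "nat \<Rightarrow> real^'n"
    and a b :: "nat \<Rightarrow> real"
    and V phi :: "nat \<Rightarrow> real \<Rightarrow> real"
  assumes C3: "C3_on (\<lambda>z. f (fst z) (snd z)) (UNIV \<times> {0..})"
    and grad: "\<And>y s. s \<ge> 0 \<Longrightarrow> ((\<lambda>z. f z s) has_derivative (\<lambda>h. gx y s \<bullet> h)) (at y)"
    and hess: "\<And>y s. s \<ge> 0 \<Longrightarrow> ((\<lambda>z. gx z s) has_derivative (\<lambda>h. Hxx y s *v h)) (at y)"
    and d_gxt: "\<And>y s. s \<ge> 0 \<Longrightarrow>
                  ((\<lambda>r. gx y r) has_vector_derivative gxt y s) (at s within {0..})"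
    and d_Hxxt: "\<And>y s. s \<ge> 0 \<Longrightarrow>
                  ((\<lambda>r. Hxx y r) has_vector_derivative Hxxt y s) (at s within {0..})"
    and d_gxtt: "\<And>y s. s \<ge> 0 \<Longrightarrow>
                  ((\<lambda>r. gxt y r) has_vector_derivative gxtt y s) (at s within {0..})"
    and d_Hxxx: "\<And>y s i. s \<ge> 0 \<Longrightarrow>
                  ((\<lambda>r. Hxx (y + r *\<^sub>R axis i 1) s) has_vector_derivative Hxxx i y s) (at 0)"
    and m_pos: "m > 0"
    and strong: "\<And>y s v. s \<ge> 0 \<Longrightarrow> v \<bullet> (Hxx y s *v v) \<ge> m * (v \<bullet> v)"
    and consts_pos: "Cxx > 0" "Cxt > 0" "Cxxt > 0" "Cxtt > 0" "Cxxx > 0"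
    and bnd_xx: "\<And>y s. s \<ge> 0 \<Longrightarrow> onorm (\<lambda>v. Hxx y s *v v) \<le> Cxx"
    and bnd_xt: "\<And>y s. s \<ge> 0 \<Longrightarrow> norm (gxt y s) \<le> Cxt"
    and bnd_xxt: "\<And>y s. s \<ge> 0 \<Longrightarrow> onorm (\<lambda>v. Hxxt y s *v v) \<le> Cxxt"
    and bnd_xtt: "\<And>y s. s \<ge> 0 \<Longrightarrow> norm (gxtt y s) \<le> Cxtt"
    and bnd_xxx: "\<And>y s i. s \<ge> 0 \<Longrightarrow> onorm (\<lambda>v. Hxxx i y s *v v) \<le> Cxxx"
    and alpha_pos: "\<alpha> > 0" and eps_pos: "\<epsilon> > 0"
    and t0: "t 0 = 0" and x_0: "x 0 = x0"
    and xd_def: "\<And>k. xd k = - (matrix_inv (Hxx (x k) (t k)) *v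
                                  (\<alpha> *\<^sub>R gx (x k) (t k) + gxt (x k) (t k)))"
    and V_def: "\<And>k s. V k s = (norm (gx (x k + (s - t k) *\<^sub>R xd k) s))^2 / 2"
    and a_def: "\<And>k. a k = Cxx * norm (xd k) + Cxt"
    and b_def: "\<And>k. b k = (Cxxx * l1norm (xd k) + 2 * Cxxt) * norm (xd k) + Cxtt"
    and phi_def: "\<And>k s. phi k s = (if cubic then phi_cub \<alpha> (b k) (V k (t k)) (s - t k)
                                   else phi_quad \<alpha> (a k) (b k) (V k (t k)) (s - t k))"
    and step_big: "\<And>k. V k (t k) \<ge> \<epsilon> \<Longrightarrow>
         t k < t (Suc k) \<and> phi k (t (Suc k)) = 0 \<and>
         (\<forall>s. t k < s \<and> s < t (Suc k) \<longrightarrow> phi k s \<noteq> 0)"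
    and step_small: "\<And>k. V k (t k) < \<epsilon> \<Longrightarrow>
         t k < t (Suc k) \<and> V k (t k) + integral {t k..t (Suc k)} (phi k) = \<epsilon> \<and>
         (\<forall>s. t k < s \<and> s < t (Suc k) \<longrightarrow> V k (t k) + integral {t k..s} (phi k) \<noteq> \<epsilon>)"
    and x_next: "\<And>k. x (Suc k) = x k + (t (Suc k) - t k) *\<^sub>R xd k"
  shows "\<exists>m'::nat. (\<forall>k\<ge>m'. \<forall>s\<in>{t k..t (Suc k)}. V k s \<le> \<epsilon>) \<and>
                   (\<exists>\<tau>>0. \<forall>k. t (Suc k) - t k > \<tau>)"
proof -
  interpret S: setting gx gxt gxtt Hxx Hxxt Hxxx Cxx Cxt Cxxt Cxtt Cxxx
    by (rule setting.intro[OF hess d_gxt d_Hxxt d_gxtt d_Hxxx bnd_xx bnd_xt bnd_xxt bnd_xtt bnd_xxx])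
  define Vk where "Vk k = V k (t k)" for k
  define g where "g k = gx (x k) (t k)" for k
  define D where "D k = t (Suc k) - t k" for k
  have Vk_eq: "Vk k = norm (g k)^2/2" for k unfolding Vk_def g_def V_def by simp
  have Vk0: "Vk k \<ge> 0" for k unfolding Vk_eq by simp
  have Dpos: "D k > 0" for k
    using step_big[of k] step_small[of k] unfolding D_def Vk_def[symmetric] by (cases "Vk k \<ge> \<epsilon>") auto
  have tpos: "t k \<ge> 0" for k
  proof (induction k)
    case 0 then show ?case using t0 by simp
  next
    case (Suc k) then show ?case using Dpos[of k] unfolding D_def by simp
  qed
  have L0: "S.LL (x k) (xd k) (t k) 0 = (-\<alpha>) *\<^sub>R g k" for k
  proof -
    have "Hxx (x k) (t k) *v xd k = - (\<alpha> *\<^sub>R gx (x k) (t k) + gxt (x k) (t k))"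
      unfolding xd_def
      using inv_apply[OF m_pos strong[OF tpos[of k]], of "x k" "\<alpha> *\<^sub>R gx (x k) (t k) + gxt (x k) (t k)"]
      using matrix_vector_mult_diff_distrib[of "Hxx (x k) (t k)" 0] by simp
    then show ?thesis unfolding S.LL_def g_def by simp
  qed
  have Vtraj: "V k (t k + u) = norm (S.GG (x k) (xd k) (t k) u)^2/2" for k u
    unfolding V_def S.GG_def by simp
  have bk: "b k = S.bb (xd k)" for k unfolding b_def S.bb_def ..
  have cpos: "Cxx \<ge> 0" "Cxt \<ge> 0" "Cxxt \<ge> 0" "Cxtt \<ge> 0" "Cxxx \<ge> 0" using consts_pos by auto
  have main: "V k (t k + u) \<le> Vk k + PhiF cubic \<alpha> (a k) (b k) (Vk k) u" if "u \<ge> 0" for k u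
    using S.step_main[OF tpos[of k] alpha_pos L0[of k, unfolded g_def] a_def[of k] bk[of k] cpos that, of cubic]
    unfolding Vtraj Vk_eq g_def by simp
  have phik: "phi k = (\<lambda>s. phiF cubic \<alpha> (a k) (b k) (Vk k) (s - t k))" for k
    unfolding phi_def[abs_def] phiF_def Vk_def by simp
  have Vnext: "Vk (Suc k) = V k (t (Suc k))" for k
    unfolding Vk_def V_def x_next by simp
  have tD: "t k + D k = t (Suc k)" for k unfolding D_def by simp
  have big_nz: "phiF cubic \<alpha> (a k) (b k) (Vk k) u \<noteq> 0"
    if "Vk k \<ge> \<epsilon>" "0 < u" "u < D k" for k u
  proof -
    have "t k < t k + u" "t k + u < t (Suc k)" using that unfolding D_def by auto
    then have "phi k (t k + u) \<noteq> 0" using step_big[of k] that(1) unfolding Vk_def by blast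
    then show ?thesis unfolding phik by simp
  qed
  have big_D: "phiF cubic \<alpha> (a k) (b k) (Vk k) (D k) = 0" if "Vk k \<ge> \<epsilon>" for k
    using step_big[of k] that unfolding Vk_def[symmetric] phik D_def by simp
  have big_le: "phiF cubic \<alpha> (a k) (b k) (Vk k) u \<le> 0"
    if "Vk k \<ge> \<epsilon>" "0 \<le> u" "u \<le> D k" for k u
  proof (cases "u = D k")
    case True then show ?thesis using big_D that by simp
  next
    case False
    then have "u < D k" using that by simp
    have "Vk k > 0" using that eps_pos by simp
    from big_neg[OF this alpha_pos big_nz[OF that(1)] that(2) \<open>u < D k\<close>] show ?thesis by simp
  qed
  have big_mono: "PhiF cubic \<alpha> (a k) (b k) (Vk k) u2 \<le> PhiF cubic \<alpha> (a k) (b k) (Vk k) u1"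
    if "Vk k \<ge> \<epsilon>" "0 \<le> u1" "u1 \<le> u2" "u2 \<le> D k" for k u1 u2
    using that by (intro PhiF_mono big_le) auto
  have intk: "integral {t k..t k + u} (phi k) = PhiF cubic \<alpha> (a k) (b k) (Vk k) u" if "u \<ge> 0" for k u
    unfolding phik by (rule integral_PhiF[OF that])
  have small_nz: "Vk k + PhiF cubic \<alpha> (a k) (b k) (Vk k) u \<noteq> \<epsilon>"
    if "Vk k < \<epsilon>" "0 < u" "u < D k" for k u
  proof -
    have "t k < t k + u" "t k + u < t (Suc k)" using that unfolding D_def by auto
    then have "Vk k + integral {t k..t k + u} (phi k) \<noteq> \<epsilon>"
      using step_small[of k] that(1) unfolding Vk_def by blast
    then show ?thesis using intk[of u k] that by simp
  qed
  have small_D: "Vk k + PhiF cubic \<alpha> (a k) (b k) (Vk k) (D k) = \<epsilon>" if "Vk k < \<epsilon>" for k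
  proof -
    have "Vk k + integral {t k..t k + D k} (phi k) = \<epsilon>"
      using step_small[of k] that unfolding Vk_def[symmetric] tD by simp
    then show ?thesis using intk[of "D k" k] Dpos[of k] by simp
  qed
  have Vs: "V k s \<le> Vk k + PhiF cubic \<alpha> (a k) (b k) (Vk k) (s - t k)" if "t k \<le> s" for k s
    using main[of "s - t k" k] that by simp
  have int_big: "V k s \<le> Vk k" if "Vk k \<ge> \<epsilon>" "t k \<le> s" "s \<le> t (Suc k)" for k s
  proof -
    have "PhiF cubic \<alpha> (a k) (b k) (Vk k) (s - t k) \<le> PhiF cubic \<alpha> (a k) (b k) (Vk k) 0"
      using that by (intro big_mono) (auto simp: D_def)
    then show ?thesis using Vs[OF that(2)] by simp
  qed
  have int_small: "V k s \<le> \<epsilon>" if "Vk k < \<epsilon>" "t k \<le> s" "s \<le> t (Suc k)" for k s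
  proof (cases "s = t (Suc k)")
    case True
    then have "s - t k = D k" unfolding D_def by simp
    then show ?thesis using Vs[OF that(2)] small_D[OF that(1)] by simp
  next
    case False
    then have "s - t k < D k" using that unfolding D_def by simp
    then have "Vk k + PhiF cubic \<alpha> (a k) (b k) (Vk k) (s - t k) < \<epsilon>"
      using small_lt[OF that(1) small_nz[OF that(1)]] that(2) by simp
    then show ?thesis using Vs[OF that(2)] by simp
  qed
  have next_big: "Vk (Suc k) \<le> Vk k + PhiF cubic \<alpha> (a k) (b k) (Vk k) (D k)" for k
    using main[of "D k" k] Dpos[of k] unfolding Vnext tD by simp
  have next_big2: "Vk (Suc k) \<le> Vk k" if "Vk k \<ge> \<epsilon>" for k
    using int_big[OF that, of "t (Suc k)"] Dpos[of k] unfolding Vnext D_def by simp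
  have next_small: "Vk (Suc k) \<le> \<epsilon>" if "Vk k < \<epsilon>" for k
    using int_small[OF that, of "t (Suc k)"] Dpos[of k] unfolding Vnext D_def by simp
  define M where "M = max (Vk 0) \<epsilon>"
  have VkM: "Vk k \<le> M" for k
  proof (induction k)
    case 0 then show ?case unfolding M_def by simp
  next
    case (Suc k)
    show ?case
    proof (cases "Vk k \<ge> \<epsilon>")
      case True then show ?thesis using next_big2[OF True] Suc by simp
    next
      case False then show ?thesis using next_small[of k] unfolding M_def by simp
    qed
  qed
  define Gm where "Gm = sqrt (2*M)"
  have gb: "norm (g k) \<le> Gm" for k
    unfolding Gm_def using VkM[of k] unfolding Vk_eq by (intro real_le_rsqrt) simp
  have Gm0: "Gm \<ge> 0" unfolding Gm_def M_def using eps_pos by simp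
  have Hxd: "Hxx (x k) (t k) *v xd k = - (\<alpha> *\<^sub>R g k + gxt (x k) (t k))" for k
    unfolding xd_def g_def
    using inv_apply[OF m_pos strong[OF tpos[of k]], of "x k" "\<alpha> *\<^sub>R gx (x k) (t k) + gxt (x k) (t k)"]
    using matrix_vector_mult_diff_distrib[of "Hxx (x k) (t k)" 0] by simp
  define X where "X = (\<alpha>*Gm + Cxt)/m"
  have xdb: "norm (xd k) \<le> X" for k
  proof -
    let ?w = "\<alpha> *\<^sub>R g k + gxt (x k) (t k)"
    have "m * (xd k \<bullet> xd k) \<le> xd k \<bullet> (Hxx (x k) (t k) *v xd k)" by (rule strong[OF tpos])
    also have "\<dots> = - (xd k \<bullet> ?w)" unfolding Hxd by (simp add: inner_simps)
    also have "\<dots> \<le> norm (xd k) * norm ?w"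
      using Cauchy_Schwarz_ineq2[of "xd k" ?w] abs_ge_minus_self[of "xd k \<bullet> ?w"] by linarith
    also have "\<dots> \<le> norm (xd k) * (\<alpha>*Gm + Cxt)"
    proof (rule mult_left_mono)
      have "norm ?w \<le> norm (\<alpha> *\<^sub>R g k) + norm (gxt (x k) (t k))" by (rule norm_triangle_ineq)
      also have "\<dots> \<le> \<alpha>*Gm + Cxt"
        using gb[of k] bnd_xt[OF tpos[of k], of "x k"] alpha_pos
        by (intro add_mono) (auto intro: mult_left_mono)
      finally show "norm ?w \<le> \<alpha>*Gm + Cxt" .
    qed simp
    finally have "m * norm (xd k)^2 \<le> norm (xd k) * (\<alpha>*Gm + Cxt)"
      by (simp add: power2_norm_eq_inner)
    then have "m * norm (xd k) \<le> \<alpha>*Gm + Cxt"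
      by (cases "norm (xd k) = 0") (use alpha_pos Gm0 consts_pos in \<open>auto simp: power2_eq_square\<close>)
    then show ?thesis unfolding X_def using m_pos by (simp add: pos_le_divide_eq mult.commute)
  qed
  have X0: "X \<ge> 0" unfolding X_def using alpha_pos Gm0 consts_pos m_pos by simp
  define A where "A = Cxx*X + Cxt"
  define B where "B = (Cxxx*real CARD('n)*X + 2*Cxxt)*X + Cxtt"
  have ak: "0 \<le> a k" "a k \<le> A" for k
    unfolding a_def A_def using xdb[of k] cpos by (auto intro: mult_left_mono)
  have bk2: "0 \<le> b k" "b k \<le> B" for k
  proof -
    have l1: "l1norm (xd k) \<le> real CARD('n) * X"
      using l1_bound[of "xd k"] xdb[of k] by (meson mult_left_mono of_nat_0_le_iff order_trans)
    have "Cxxx * l1norm (xd k) + 2*Cxxt \<le> Cxxx * real CARD('n) * X + 2*Cxxt"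
      using l1 cpos by (simp add: mult.assoc mult_left_mono)
    moreover have "0 \<le> Cxxx * l1norm (xd k) + 2*Cxxt" using cpos l1norm_nonneg[of "xd k"] by simp
    ultimately have "(Cxxx * l1norm (xd k) + 2*Cxxt) * norm (xd k) \<le> (Cxxx * real CARD('n) * X + 2*Cxxt) * X"
      using xdb[of k] by (intro mult_mono) auto
    then show "b k \<le> B" unfolding b_def B_def by simp
    show "0 \<le> b k" unfolding b_def using cpos l1norm_nonneg[of "xd k"] by simp
  qed
  define K where "K = (A*B/2 + A^2 + B*Gm) + (B^2/2 + 3/2*\<alpha>*Gm*B + Gm*B + \<alpha>^2*Gm^2)"
  have A0: "A > 0" unfolding A_def using X0 consts_pos by (simp add: add_nonneg_pos)
  have B0: "B \<ge> 0" unfolding B_def using X0 cpos by simp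
  have Kpos: "K > 0"
  proof -
    have "0 \<le> B*Gm" "0 \<le> A*B" "0 < A^2" "0 \<le> B^2" "0 \<le> 3/2*\<alpha>*Gm*B" "0 \<le> \<alpha>^2*Gm^2" "0 \<le> Gm*B"
      using A0 B0 Gm0 alpha_pos by auto
    then show ?thesis unfolding K_def by linarith
  qed
  have pb: "phiF cubic \<alpha> (a k) (b k) (Vk k) u \<le> K * u - 2*\<alpha>*Vk k"
     "PhiF cubic \<alpha> (a k) (b k) (Vk k) u \<le> K * u^2/2 - 2*\<alpha>*Vk k*u"
    if "0 \<le> u" "u \<le> 1" for k u
  proof -
    let ?n = "norm (g k)"
    let ?\<kappa> = "(a k*b k/2 + a k^2 + b k*?n) + (b k^2/2 + 3/2*\<alpha>*?n*b k + ?n*b k + \<alpha>^2*?n^2)"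
    have kK: "?\<kappa> \<le> K" unfolding K_def
      by (rule kappa_mono[OF ak(1)[of k] ak(2)[of k] bk2(1)[of k] bk2(2)[of k] norm_ge_zero gb[of k] alpha_pos])
    have P: "phiF cubic \<alpha> (a k) (b k) (Vk k) u \<le> ?\<kappa> * u - 2*\<alpha>*Vk k"
       "PhiF cubic \<alpha> (a k) (b k) (Vk k) u \<le> ?\<kappa> * u^2/2 - 2*\<alpha>*Vk k*u"
      using poly_bounds[OF alpha_pos ak(1)[of k] bk2(1)[of k] that(1) that(2) refl Vk_eq[of k], of cubic]
      by auto
    have "?\<kappa> * u \<le> K * u" using kK that by (intro mult_right_mono) auto
    moreover have "?\<kappa> * u^2/2 \<le> K * u^2/2" using kK that by (intro divide_right_mono mult_right_mono) auto
    ultimately show "phiF cubic \<alpha> (a k) (b k) (Vk k) u \<le> K * u - 2*\<alpha>*Vk k"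
       "PhiF cubic \<alpha> (a k) (b k) (Vk k) u \<le> K * u^2/2 - 2*\<alpha>*Vk k*u"
      using P by linarith+
  qed
  define \<tau>0 where "\<tau>0 = min 1 (min (\<alpha>*\<epsilon>/K) (\<epsilon>/K))"
  have t0pos: "\<tau>0 > 0" unfolding \<tau>0_def using alpha_pos eps_pos Kpos by simp
  have t0le1: "\<tau>0 \<le> 1" unfolding \<tau>0_def by simp
  have Kt1: "K * \<tau>0 \<le> \<alpha>*\<epsilon>"
  proof -
    have "\<tau>0 \<le> \<alpha>*\<epsilon>/K" unfolding \<tau>0_def by simp
    then show ?thesis using Kpos by (simp add: le_divide_eq mult.commute)
  qed
  have Kt2: "K * \<tau>0 \<le> \<epsilon>"
  proof -
    have "\<tau>0 \<le> \<epsilon>/K" unfolding \<tau>0_def by simp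
    then show ?thesis using Kpos by (simp add: le_divide_eq mult.commute)
  qed
  have Dge: "D k \<ge> \<tau>0" for k
  proof (rule ccontr)
    assume "\<not> D k \<ge> \<tau>0"
    then have Dl: "D k < \<tau>0" by simp
    have D0: "0 < D k" "D k \<le> 1" using Dpos[of k] Dl t0le1 by auto
    have KD: "K * D k < K * \<tau>0" using Dl Kpos by simp
    show False
    proof (cases "Vk k \<ge> \<epsilon>")
      case True
      have "0 = phiF cubic \<alpha> (a k) (b k) (Vk k) (D k)" using big_D[OF True] by simp
      also have "\<dots> \<le> K * D k - 2*\<alpha>*Vk k" using pb(1)[of "D k" k] D0 by simp
      finally have "2*\<alpha>*Vk k \<le> K * D k" by simp
      moreover have "2*\<alpha>*\<epsilon> \<le> 2*\<alpha>*Vk k" using True alpha_pos by simp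
      moreover have "0 < \<alpha>*\<epsilon>" using alpha_pos eps_pos by simp
      moreover have "2*\<alpha>*\<epsilon> = 2*(\<alpha>*\<epsilon>)" by simp
      ultimately show False using KD Kt1 by linarith
    next
      case False
      then have lt: "Vk k < \<epsilon>" by simp
      have eq: "\<epsilon> = Vk k + PhiF cubic \<alpha> (a k) (b k) (Vk k) (D k)" using small_D[OF lt] by simp
      have P: "PhiF cubic \<alpha> (a k) (b k) (Vk k) (D k) \<le> K * (D k)^2/2 - 2*\<alpha>*Vk k*D k"
        using pb(2)[of "D k" k] D0 by simp
      have sq: "K * (D k)^2 = (K * D k) * D k" by (simp add: power2_eq_square)
      show False
      proof (cases "Vk k \<ge> \<epsilon>/2")
        case True
        have "(K * D k) * D k \<le> (\<alpha>*\<epsilon>) * D k" using KD Kt1 D0 by (intro mult_right_mono) auto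
        moreover have "\<alpha>*\<epsilon>*D k \<le> 2*\<alpha>*Vk k*D k"
        proof -
          have "\<alpha>*\<epsilon> \<le> 2*\<alpha>*Vk k" using True alpha_pos by simp
          then show ?thesis using D0 by (intro mult_right_mono) auto
        qed
        moreover have "0 < \<alpha>*\<epsilon>*D k" using alpha_pos eps_pos D0 by simp
        ultimately have "PhiF cubic \<alpha> (a k) (b k) (Vk k) (D k) < 0" using P sq by linarith
        then show False using eq lt by linarith
      next
        case False
        have "(K * D k) * D k \<le> (K * D k) * 1" using KD Kpos D0 by (intro mult_left_mono) auto
        moreover have "0 \<le> 2*\<alpha>*Vk k*D k" using alpha_pos Vk0[of k] D0 by simp
        ultimately have "PhiF cubic \<alpha> (a k) (b k) (Vk k) (D k) < \<epsilon>/2"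
          using P sq KD Kt2 by linarith
        then show False using eq False by linarith
      qed
    qed
  qed
  define \<delta> where "\<delta> = \<alpha>*\<epsilon>*\<tau>0"
  have \<delta>pos: "\<delta> > 0" unfolding \<delta>_def using alpha_pos eps_pos t0pos by simp
  have dec: "Vk (Suc k) \<le> Vk k - \<delta>" if big: "Vk k \<ge> \<epsilon>" for k
  proof -
    have "Vk (Suc k) \<le> Vk k + PhiF cubic \<alpha> (a k) (b k) (Vk k) (D k)" by (rule next_big)
    also have "\<dots> \<le> Vk k + PhiF cubic \<alpha> (a k) (b k) (Vk k) \<tau>0"
      using big_mono[OF big, of \<tau>0 "D k"] t0pos Dge[of k] by simp
    also have "\<dots> \<le> Vk k + (K * \<tau>0^2/2 - 2*\<alpha>*Vk k*\<tau>0)"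
      using pb(2)[of \<tau>0 k] t0pos t0le1 by simp
    also have "\<dots> \<le> Vk k - \<delta>"
    proof -
      have "K * \<tau>0^2 = (K*\<tau>0)*\<tau>0" by (simp add: power2_eq_square)
      also have "\<dots> \<le> (\<alpha>*\<epsilon>)*\<tau>0" using Kt1 t0pos by (intro mult_right_mono) auto
      finally have 1: "K * \<tau>0^2 \<le> \<alpha>*\<epsilon>*\<tau>0" .
      have "2*\<alpha>*\<epsilon>*\<tau>0 \<le> 2*\<alpha>*Vk k*\<tau>0" using big alpha_pos t0pos by simp
      moreover have "0 \<le> \<alpha>*\<epsilon>*\<tau>0" using alpha_pos eps_pos t0pos by simp
      moreover have "2*\<alpha>*\<epsilon>*\<tau>0 = 2*(\<alpha>*\<epsilon>*\<tau>0)" by simp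
      ultimately show ?thesis using 1 unfolding \<delta>_def by linarith
    qed
    finally show ?thesis .
  qed
  have ex: "\<exists>m'. Vk m' \<le> \<epsilon>"
  proof (rule ccontr)
    assume "\<not> ?thesis"
    then have all: "Vk k > \<epsilon>" for k by (simp add: not_le)
    have lin: "Vk k \<le> Vk 0 - real k * \<delta>" for k
    proof (induction k)
      case 0 then show ?case by simp
    next
      case (Suc k)
      have "Vk (Suc k) \<le> Vk k - \<delta>" using dec all[of k] by simp
      then show ?case using Suc by (simp add: algebra_simps)
    qed
    obtain n where n: "Vk 0 < real n * \<delta>" using reals_Archimedean3[OF \<delta>pos] by blast
    show False using lin[of n] n Vk0[of n] by linarith
  qed
  then obtain m' where m': "Vk m' \<le> \<epsilon>" by blast
  have inv: "Vk k \<le> \<epsilon>" if "k \<ge> m'" for k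
    using that
  proof (induction k rule: dec_induct)
    case base then show ?case by (rule m')
  next
    case (step k)
    show ?case
    proof (cases "Vk k \<ge> \<epsilon>")
      case True then show ?thesis using next_big2[OF True] step by simp
    next
      case False then show ?thesis using next_small[of k] by simp
    qed
  qed
  have P1: "\<forall>k\<ge>m'. \<forall>s\<in>{t k..t (Suc k)}. V k s \<le> \<epsilon>"
  proof (intro allI impI ballI)
    fix k s assume k: "k \<ge> m'" and s: "s \<in> {t k..t (Suc k)}"
    show "V k s \<le> \<epsilon>"
    proof (cases "Vk k \<ge> \<epsilon>")
      case True then show ?thesis using int_big[OF True, of s] s inv[OF k] by simp
    next
      case False then show ?thesis using int_small[of k s] s by simp
    qed
  qed
  have P2: "\<forall>k. t (Suc k) - t k > \<tau>0/2"
  proof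
    fix k show "t (Suc k) - t k > \<tau>0/2" using Dge[of k] t0pos unfolding D_def by linarith
  qed
  have P3: "\<tau>0/2 > 0" using t0pos by simp
  show ?thesis using P1 P2 P3 by blast
qed



end
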